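(* For every $m\ge 1$, $$\mathscr{T}_m=\left\{\tau_1^{\epsilon_1}\circ\tau_2^{\epsilon_2}\circ\cdots\circ\tau_m^{\epsilon_m}\ \middle|\ \epsilon_1,\ldots,\epsilon_m\in\{1,2\}\right\}.$$ (Since $\tau_i^2$ is the identity, this is the set of all products $\tau_{i_1}\circ\cdots\circ\tau_{i_k}$ with $i_1<\cdots<i_k$, including the empty product.)
   Context: $\mathcal{S}_m$ is the group of bijections of $I_m=\{1,\ldots,m\}$, with $\sigma\circ\tau$ meaning apply $\tau$ first, then $\sigma$. $\mathscr{T}_m=\{\sigma\in\mathcal{S}_m \mid \exists t\in I_m:\ \sigma(1)>\sigma(2)>\cdots>\sigma(t)=1,\ \sigma(t)<\sigma(t+1)<\cdots<\sigma(m)\}$. For $i\in I_m$, $\tau_i\in\mathcal{S}_m$ is defined by $\tau_i(j)=i+1-j$ for $1\le j\le i$ and $\tau_i(j)=j$ for $j>i$. *)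

theory Defs
  imports "HOL-Combinatorics.Permutations"
begin

definition T_set :: "nat \<Rightarrow> (nat \<Rightarrow> nat) set" where
  "T_set m = {\<sigma>. \<sigma> permutes {1..m} \<and>
     (\<exists>t\<in>{1..m}. (\<forall>j. 1 \<le> j \<and> j < t \<longrightarrow> \<sigma> j > \<sigma> (j+1)) \<and> \<sigma> t = 1 \<and>
                    (\<forall>j. t \<le> j \<and> j < m \<longrightarrow> \<sigma> j < \<sigma> (j+1)))}"

definition tau :: "nat \<Rightarrow> nat \<Rightarrow> nat" where
  "tau i j = (if 1 \<le> j \<and> j \<le> i then i + 1 - j else j)"

fun tau_prod :: "nat \<Rightarrow> (nat \<Rightarrow> nat) \<Rightarrow> (nat \<Rightarrow> nat)" where
  "tau_prod 0 e = id"
| "tau_prod (Suc k) e = tau_prod k e \<circ> (tau (Suc k) ^^ e (Suc k))"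

end

theory Submission
  imports Defs
begin

definition Vs :: "(nat \<Rightarrow> nat) \<Rightarrow> nat \<Rightarrow> nat \<Rightarrow> bool" where
  "Vs \<sigma> m t \<longleftrightarrow> t\<in>{1..m} \<and> (\<forall>j. 1 \<le> j \<and> j < t \<longrightarrow> \<sigma> j > \<sigma> (j+1)) \<and> \<sigma> t = 1 \<and>
                    (\<forall>j. t \<le> j \<and> j < m \<longrightarrow> \<sigma> j < \<sigma> (j+1))"

lemma T_set_Vs: "\<sigma> \<in> T_set m \<longleftrightarrow> \<sigma> permutes {1..m} \<and> (\<exists>t. Vs \<sigma> m t)"
  unfolding T_set_def Vs_def by auto

lemma tau_tau: "tau m (tau m x) = x"
  unfolding tau_def by auto

lemma tau_permutes: "tau m permutes {1..m}"
  unfolding permutes_def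
proof (intro conjI allI impI)
  fix x assume "x \<notin> {1..m}" then show "tau m x = x" unfolding tau_def by auto
next
  fix y show "\<exists>!x. tau m x = y"
    by (metis tau_tau)
qed

lemma tau_pow2: "tau m ^^ 2 = id"
  by (auto simp: numeral_2_eq_2 tau_tau)

lemma tau_1: "tau 1 = id"
  unfolding tau_def by (auto simp: fun_eq_iff)

lemma tau_1': "tau (Suc 0) = id"
  using tau_1 by simp

lemma tau_prod_cong: "(\<And>i. 1 \<le> i \<Longrightarrow> i \<le> k \<Longrightarrow> e i = e' i) \<Longrightarrow> tau_prod k e = tau_prod k e'"
proof (induction k)
  case 0 show ?case by (simp only: tau_prod.simps)
next
  case (Suc k) then show ?case by simp
qed

lemma tau_prod_permutes: "tau_prod k e permutes {1..k}"
proof (induction k)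
  case 0 then show ?case by (simp only: tau_prod.simps permutes_id)
next
  case (Suc k)
  have a: "tau_prod k e permutes {1..Suc k}"
    using Suc permutes_subset by fastforce
  have b: "(tau (Suc k) ^^ n) permutes {1..Suc k}" for n
  proof (induction n)
    case 0 show ?case by (simp only: funpow.simps(1) permutes_id)
  next
    case (Suc n) show ?case unfolding funpow.simps(2) by (rule permutes_compose[OF Suc tau_permutes])
  qed
  show ?case unfolding tau_prod.simps by (rule permutes_compose[OF b a])
qed

lemma perm_bound: "\<sigma> permutes {1..m} \<Longrightarrow> j \<in> {1..m} \<Longrightarrow> \<sigma> j \<in> {1..m}"
  using permutes_in_image[of \<sigma> "{1..m}" j] by simp

lemma Vs_tau:
  assumes "Vs \<sigma> m t"
  shows "Vs (\<sigma> \<circ> tau m) m (m+1-t)"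
proof -
  from assms have t: "1 \<le> t" "t \<le> m" and dec: "\<And>j. 1 \<le> j \<Longrightarrow> j < t \<Longrightarrow> \<sigma> j > \<sigma> (j+1)"
    and one: "\<sigma> t = 1" and inc: "\<And>j. t \<le> j \<Longrightarrow> j < m \<Longrightarrow> \<sigma> j < \<sigma> (j+1)"
    unfolding Vs_def by auto
  have tv: "tau m j = m + 1 - j" if "1 \<le> j" "j \<le> m" for j using that unfolding tau_def by auto
  show ?thesis unfolding Vs_def
  proof (intro conjI allI impI)
    show "m + 1 - t \<in> {1..m}" using t by auto
  next
    fix j assume j: "1 \<le> j \<and> j < m + 1 - t"
    have "\<sigma> (m - j) < \<sigma> (m - j + 1)" using inc[of "m-j"] j t by auto
    moreover have "m - j + 1 = m + 1 - j" using j t by auto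
    moreover have "tau m (j+1) = m - j" using j t tv[of "j+1"] by auto
    ultimately show "(\<sigma> \<circ> tau m) j > (\<sigma> \<circ> tau m) (j+1)"
      using j t by (simp add: tv)
  next
    show "(\<sigma> \<circ> tau m) (m + 1 - t) = 1" using t one by (simp add: tv)
  next
    fix j assume j: "m + 1 - t \<le> j \<and> j < m"
    have "\<sigma> (m - j) > \<sigma> (m - j + 1)" using dec[of "m-j"] j t by auto
    moreover have "m - j + 1 = m + 1 - j" using j t by auto
    moreover have "tau m (j+1) = m - j" using j t tv[of "j+1"] by auto
    moreover have "tau m j = m + 1 - j" using j t tv[of "j"] by auto
    ultimately show "(\<sigma> \<circ> tau m) j < (\<sigma> \<circ> tau m) (j+1)"
      using j t by (simp add: tv)
  qed
qed

lemma T_tau: "\<sigma> \<in> T_set m \<Longrightarrow> \<sigma> \<circ> tau m \<in> T_set m"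
  using Vs_tau permutes_compose[OF tau_permutes] by (auto simp: T_set_Vs)

lemma T_extend:
  assumes "\<sigma> \<in> T_set n"
  shows "\<sigma> \<in> T_set (Suc n)"
proof -
  from assms obtain t where p: "\<sigma> permutes {1..n}" and v: "Vs \<sigma> n t" by (auto simp: T_set_Vs)
  have p2: "\<sigma> permutes {1..Suc n}" using p permutes_subset by fastforce
  have fix1: "\<sigma> (Suc n) = Suc n" using p by (auto simp: permutes_def)
  have "Vs \<sigma> (Suc n) t" unfolding Vs_def
  proof (intro conjI allI impI)
    fix j assume j: "t \<le> j \<and> j < Suc n"
    show "\<sigma> j < \<sigma> (j+1)"
    proof (cases "j < n")
      case True then show ?thesis using v j unfolding Vs_def by auto
    next
      case False
      then have "j = n" using j by auto
      moreover have "\<sigma> n \<in> {1..n}" using perm_bound[OF p] v j \<open>j = n\<close> unfolding Vs_def by auto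
      ultimately show ?thesis using fix1 by auto
    qed
  qed (use v in \<open>auto simp: Vs_def\<close>)
  then show ?thesis using p2 by (auto simp: T_set_Vs)
qed

lemma T_restrict:
  assumes "\<sigma> \<in> T_set (Suc n)" "n \<ge> 1" "\<sigma> (Suc n) = Suc n"
  shows "\<sigma> \<in> T_set n"
proof -
  from assms obtain t where p: "\<sigma> permutes {1..Suc n}" and v: "Vs \<sigma> (Suc n) t" by (auto simp: T_set_Vs)
  have p2: "\<sigma> permutes {1..n}"
    by (rule permutes_superset[OF p]) (use assms(3) in \<open>auto simp: le_Suc_eq\<close>)
  have "t \<noteq> Suc n" using v assms unfolding Vs_def by auto
  then have "Vs \<sigma> n t" using v unfolding Vs_def by auto
  then show ?thesis using p2 by (auto simp: T_set_Vs)
qed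

lemma T_max:
  assumes "\<sigma> \<in> T_set m"
  shows "\<sigma> m = m \<or> \<sigma> 1 = m"
proof -
  from assms obtain t where p: "\<sigma> permutes {1..m}" and v: "Vs \<sigma> m t" by (auto simp: T_set_Vs)
  have m1: "m \<ge> 1" using v unfolding Vs_def by auto
  have "m \<in> \<sigma> ` {1..m}" using permutes_image[OF p] m1 by auto
  then obtain j where j: "j \<in> {1..m}" "\<sigma> j = m" by auto
  have bd: "\<And>i. i \<in> {1..m} \<Longrightarrow> \<sigma> i \<le> m" using perm_bound[OF p] by auto
  have "j = 1 \<or> j = m"
  proof (rule ccontr)
    assume "\<not> (j = 1 \<or> j = m)"
    then have j2: "1 < j" "j < m" using j by auto
    consider "j < t" | "j = t" | "j > t" by linarith
    then show False
    proof cases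
      case 1
      have d: "\<forall>i. 1 \<le> i \<and> i < t \<longrightarrow> \<sigma> i > \<sigma> (i+1)" using v unfolding Vs_def by blast
      have "\<sigma> (j - 1) > \<sigma> (j - 1 + 1)" proof -
        have "1 \<le> j - 1 \<and> j - 1 < t" using 1 j2 by auto
        then show ?thesis using d by blast
      qed
      moreover have "\<sigma> (j-1) \<le> m" proof -
        have "j - 1 \<in> {1..m}" using j2 by auto
        then show ?thesis using bd by blast
      qed
      ultimately show False using j j2 by auto
    next
      case 2 then show False using v j j2 unfolding Vs_def by auto
    next
      case 3
      then have "\<sigma> j < \<sigma> (j + 1)" using v j2 unfolding Vs_def by auto
      moreover have "\<sigma> (j+1) \<le> m" using bd j2 by auto
      ultimately show False using j by auto
    qed
  qed
  then show ?thesis using j by auto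
qed

lemma sup_dir: "m \<ge> 1 \<Longrightarrow> tau_prod m e \<in> T_set m"
proof (induction m)
  case 0 then show ?case by simp
next
  case (Suc n)
  show ?case
  proof (cases "n = 0")
    case True
    have "tau 1 ^^ k = id" for k by (induction k) (auto simp: tau_1')
    then have "tau_prod (Suc n) e = id" using True by simp
    moreover have "id \<in> T_set (Suc n)" using True unfolding T_set_def by auto
    ultimately show ?thesis by (simp only:)
  next
    case False
    then have h: "tau_prod n e \<in> T_set (Suc n)" using Suc T_extend by auto
    have "(tau_prod n e \<circ> (tau (Suc n) ^^ k)) \<in> T_set (Suc n)" for k
    proof (induction k)
      case 0 then show ?case using h by simp
    next
      case (Suc k)
      have "tau_prod n e \<circ> (tau (Suc n) ^^ Suc k) = (tau_prod n e \<circ> (tau (Suc n) ^^ k)) \<circ> tau (Suc n)"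
        by (simp only: funpow_Suc_right comp_assoc)
      then show ?case using T_tau[OF Suc.IH] by (simp only:)
    qed
    then show ?thesis unfolding tau_prod.simps by blast
  qed
qed

lemma sub_dir: "m \<ge> 1 \<Longrightarrow> \<sigma> \<in> T_set m \<Longrightarrow> \<exists>e. \<sigma> = tau_prod m e \<and> (\<forall>i\<in>{1..m}. e i \<in> {1, 2})"
proof (induction m arbitrary: \<sigma>)
  case 0 then show ?case by simp
next
  case (Suc n)
  show ?case
  proof (cases "n = 0")
    case True
    have p: "\<sigma> permutes {1}" using Suc.prems True by (auto simp: T_set_def)
    then have "\<sigma> = id" by (metis permutes_sing)
    moreover have "tau 1 ^^ k = id" for k by (induction k) (auto simp: tau_1')
    ultimately have "\<sigma> = tau_prod (Suc n) (\<lambda>_. 1)" using True by simp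
    moreover have "\<forall>i\<in>{1..Suc n}. (\<lambda>_. 1::nat) i \<in> {1,2}" by simp
    ultimately show ?thesis by blast
  next
    case False
    have key: "\<exists>e. \<rho> = tau_prod (Suc n) e \<and> (\<forall>i\<in>{1..Suc n}. e i \<in> {1, 2}) \<and> e (Suc n) = 2"
      if r: "\<rho> \<in> T_set (Suc n)" "\<rho> (Suc n) = Suc n" for \<rho>
    proof -
      have "\<rho> \<in> T_set n" using T_restrict r False by auto
      then obtain e where e: "\<rho> = tau_prod n e" "\<forall>i\<in>{1..n}. e i \<in> {1, 2}"
        using Suc.IH False by auto
      define e' where "e' = e(Suc n := 2)"
      have c: "tau_prod n e' = tau_prod n e" by (rule tau_prod_cong) (auto simp: e'_def)
      have e2: "e' (Suc n) = 2" by (simp add: e'_def)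
      have h1: "tau_prod (Suc n) e' = \<rho>" using e c by (simp only: tau_prod.simps e2 tau_pow2 comp_id)
      have h2: "\<forall>i\<in>{1..Suc n}. e' i \<in> {1,2}" using e by (auto simp: e'_def)
      show ?thesis using h1 h2 e2 by metis
    qed
    from T_max[OF Suc.prems(2)] show ?thesis
    proof
      assume "\<sigma> (Suc n) = Suc n"
      then show ?thesis using key Suc.prems by blast
    next
      assume s1: "\<sigma> 1 = Suc n"
      let ?\<rho> = "\<sigma> \<circ> tau (Suc n)"
      have "?\<rho> \<in> T_set (Suc n)" using T_tau Suc.prems by auto
      moreover have "?\<rho> (Suc n) = Suc n" using s1 by (simp add: tau_def)
      ultimately obtain e where e: "?\<rho> = tau_prod (Suc n) e" "\<forall>i\<in>{1..Suc n}. e i \<in> {1, 2}"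
        "e (Suc n) = 2" using key by blast
      define e' where "e' = e(Suc n := 1)"
      have c: "tau_prod n e' = tau_prod n e" by (rule tau_prod_cong) (auto simp: e'_def)
      have "\<sigma> = ?\<rho> \<circ> tau (Suc n)" by (auto simp: tau_tau)
      also have "\<dots> = tau_prod n e \<circ> tau (Suc n)" using e
        by (simp only: tau_prod.simps tau_pow2 comp_id)
      also have "\<dots> = tau_prod (Suc n) e'" using c by (simp add: e'_def)
      finally have "\<sigma> = tau_prod (Suc n) e'" .
      moreover have "\<forall>i\<in>{1..Suc n}. e' i \<in> {1,2}" using e by (auto simp: e'_def)
      ultimately show ?thesis by blast
    qed
  qed
qed

theorem mainTheorem7:
  fixes m :: nat
  assumes "m \<ge> 1"
  shows "T_set m = {tau_prod m e | e. \<forall>i\<in>{1..m}. e i \<in> {1, 2}}"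
  using sup_dir[OF assms] sub_dir[OF assms] by blast

end
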